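(* For any constant $\epsilon\in(0,1)$, every deterministic $O(1)$-approximation algorithm for the $1$-region problem must make at least $(1-\epsilon)\log\log n$ adaptive queries to the sorted input list $X[1,n]$ (in the worst case), for all sufficiently large $n$.
   Context: Logarithms are base $2$. The input is a list $X[1,n]$ whose entries are in $\{0,1\}$, sorted in nondecreasing order; the algorithm accesses it only by adaptive queries, each revealing one entry. For $d>1$, a $d$-approximate $1$-region is an interval $R=[s,n]$ such that at least $\frac{|R|}{d}$ numbers in $X[s,n]$ equal $1$ and $[s,n]$ contains all positions $j$ with $X[j]=1$; an $O(1)$-approximation algorithm outputs a $d$-approximate $1$-region for some constant $d>1$ independent of $n$. *)

theory Defs
  imports Complex_Main
begin

text \<open>Deterministic adaptive query algorithms as decision trees.
  Ask i t0 t1 queries entry X[i]; if it is 0 continue with t0, otherwise (it is 1) with t1.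
  Out s outputs the interval [s,n].\<close>
datatype qtree = Out nat | Ask nat qtree qtree

fun run :: "qtree \<Rightarrow> (nat \<Rightarrow> nat) \<Rightarrow> nat" where
  "run (Out s) X = s"
| "run (Ask i t0 t1) X = (if X i = 0 then run t0 X else run t1 X)"

fun cost :: "qtree \<Rightarrow> (nat \<Rightarrow> nat) \<Rightarrow> nat" where
  "cost (Out s) X = 0"
| "cost (Ask i t0 t1) X = Suc (if X i = 0 then cost t0 X else cost t1 X)"

fun queries_in :: "nat \<Rightarrow> qtree \<Rightarrow> bool" where
  "queries_in n (Out s) = True"
| "queries_in n (Ask i t0 t1) = (1 \<le> i \<and> i \<le> n \<and> queries_in n t0 \<and> queries_in n t1)"

definition sorted01 :: "nat \<Rightarrow> (nat \<Rightarrow> nat) \<Rightarrow> bool" where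
  "sorted01 n X \<longleftrightarrow> (\<forall>j\<in>{1..n}. X j \<in> {0,1}) \<and> (\<forall>i j. 1 \<le> i \<and> i \<le> j \<and> j \<le> n \<longrightarrow> X i \<le> X j)"

text \<open>[s,n] (with 1 <= s <= n+1; s = n+1 is the empty interval) is a d-approximate 1-region.\<close>
definition approx_region :: "real \<Rightarrow> nat \<Rightarrow> (nat \<Rightarrow> nat) \<Rightarrow> nat \<Rightarrow> bool" where
  "approx_region d n X s \<longleftrightarrow> 1 \<le> s \<and> s \<le> n + 1
     \<and> real (card {j. s \<le> j \<and> j \<le> n \<and> X j = 1}) \<ge> real (n + 1 - s) / d
     \<and> (\<forall>j\<in>{1..n}. X j = 1 \<longrightarrow> s \<le> j)"

end

theory Submission
  imports Defs
begin

lemma out_card: "\<forall>X\<in>S. cost t X \<le> q \<Longrightarrow> card (run t ` S) \<le> 2^q"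
proof (induction t arbitrary: S q)
  case (Out s)
  have "run (Out s) ` S \<subseteq> {s}" by auto
  hence "card (run (Out s) ` S) \<le> card {s}" by (intro card_mono) auto
  hence "card (run (Out s) ` S) \<le> 1" by simp
  moreover have "(1::nat) \<le> 2^q" by simp
  ultimately show ?case by linarith
next
  case (Ask i t0 t1)
  show ?case
  proof (cases "S = {}")
    case True thus ?thesis by simp
  next
    case False
    then obtain X where "X \<in> S" by auto
    with Ask.prems have "q \<ge> 1" by (cases "X i = 0") auto
    then obtain q' where q: "q = Suc q'" by (cases q) auto
    define S0 where "S0 = {X\<in>S. X i = 0}"
    define S1 where "S1 = {X\<in>S. X i \<noteq> 0}"
    have eq: "run (Ask i t0 t1) ` S = run t0 ` S0 \<union> run t1 ` S1"
      unfolding S0_def S1_def by auto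
    have c0: "card (run t0 ` S0) \<le> 2^q'"
      apply (rule Ask.IH(1)) using Ask.prems q unfolding S0_def by auto
    have c1: "card (run t1 ` S1) \<le> 2^q'"
      apply (rule Ask.IH(2)) using Ask.prems q unfolding S1_def by auto
    have "card (run (Ask i t0 t1) ` S) \<le> card (run t0 ` S0) + card (run t1 ` S1)"
      unfolding eq by (rule card_Un_le)
    with c0 c1 q show ?thesis by simp
  qed
qed

lemma cover:
  fixes d :: real
  assumes "finite M" "d \<ge> 1" "\<forall>k\<in>{1..K}. \<exists>m\<in>M. real m \<le> d * real k \<and> k \<le> m"
  shows "real K \<le> (2*d)^card M"
  using assms
proof (induction "card M" arbitrary: M K)
  case 0
  hence "M = {}" by auto
  have "K = 0"
  proof (rule ccontr)
    assume "K \<noteq> 0"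
    hence "K \<in> {1..K}" by simp
    with 0 \<open>M = {}\<close> show False by blast
  qed
  thus ?case using \<open>M = {}\<close> by simp
next
  case (Suc c)
  show ?case
  proof (cases "K = 0")
    case True
    have "(1::real) \<le> (2*d)^card M" using Suc.prems by (intro one_le_power) auto
    with True show ?thesis by simp
  next
    case False
    then obtain m where m: "m \<in> M" "real m \<le> d * real K" "K \<le> m" using Suc.prems by force
    have mpos: "m \<ge> 1" using False m by auto
    have dpos: "d > 0" using Suc.prems by auto
    define C where "C = ceiling (real m / d)"
    have C1: "real m / d \<le> of_int C" unfolding C_def by simp
    have C2: "of_int C - 1 < real m / d" unfolding C_def
      using le_ceiling_iff[of "ceiling (real m / d)" "real m / d"] by simp
    have "real m / d > 0" using mpos dpos by simp
    hence "(0::real) < of_int C" using C1 by linarith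
    hence Cpos: "C \<ge> 1" by simp
    define K' where "K' = nat (C - 1)"
    have K'r: "real K' = of_int C - 1" unfolding K'_def using Cpos by simp
    have cM: "card (M - {m}) = c" using Suc.hyps(2) m(1) Suc.prems(1) by simp
    have IH: "real K' \<le> (2*d)^c"
    proof -
      have "real K' \<le> (2*d)^card (M - {m})"
      proof (rule Suc.hyps(1))
        show "c = card (M - {m})" using cM by simp
        show "finite (M - {m})" using Suc.prems by simp
        show "1 \<le> d" using Suc.prems by simp
        show "\<forall>k\<in>{1..K'}. \<exists>m'\<in>M - {m}. real m' \<le> d * real k \<and> k \<le> m'"
        proof
          fix k assume k: "k \<in> {1..K'}"
          have "real k \<le> real K'" using k by simp
          hence "d * real k \<le> d * (of_int C - 1)" using K'r dpos by (intro mult_left_mono) auto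
          moreover have "d * (of_int C - 1) < real m" using C2 dpos
            by (simp add: pos_less_divide_eq mult.commute)
          ultimately have kl: "d * real k < real m" by linarith
          have "d * real k < d * real K" using kl m(2) by linarith
          hence "real k < real K" using dpos by simp
          hence "k \<le> K" by simp
          then obtain m' where "m' \<in> M" "real m' \<le> d * real k" "k \<le> m'"
            using Suc.prems(3) k by force
          with kl show "\<exists>m'\<in>M - {m}. real m' \<le> d * real k \<and> k \<le> m'" by force
        qed
      qed
      thus ?thesis using cM by simp
    qed
    have cardM: "card M = Suc c" using Suc.hyps(2) by simp
    have one: "1 \<le> (2*d)^c" using Suc.prems by (intro one_le_power) auto
    have "real K \<le> real m" using m by simp
    also have "\<dots> \<le> d * (real K' + 1)" using C1 K'r dpos by (simp add: pos_divide_le_eq mult.commute)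
    also have "\<dots> \<le> d * ((2*d)^c + (2*d)^c)"
    proof -
      have "real K' + 1 \<le> (2*d)^c + (2*d)^c" using IH one by linarith
      thus ?thesis using dpos by (intro mult_left_mono) auto
    qed
    also have "\<dots> = (2*d)^card M" unfolding cardM by simp
    finally show ?thesis .
  qed
qed


lemma lower_n:
  fixes d :: real and t :: qtree
  assumes d: "d > 1" and n: "n \<ge> 1"
    and corr: "\<forall>X. sorted01 n X \<longrightarrow> approx_region d n X (run t X)"
  shows "\<exists>X. sorted01 n X \<and> real n \<le> (2*d)^(2^cost t X)"
proof -
  define Xk where "Xk k = (\<lambda>j::nat. if n+1-k \<le> j then 1 else (0::nat))" for k
  have sorted: "sorted01 n (Xk k)" for k unfolding sorted01_def Xk_def by auto
  define S where "S = Xk ` {1..n}"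
  have Sfin: "finite S" "S \<noteq> {}" unfolding S_def using n by auto
  define q where "q = Max (cost t ` S)"
  have qin: "q \<in> cost t ` S" unfolding q_def using Sfin by simp
  then obtain X where X: "X \<in> S" "cost t X = q" by auto
  have qge: "\<forall>Y\<in>S. cost t Y \<le> q" unfolding q_def using Sfin by simp
  have c1: "card (run t ` S) \<le> 2^q" by (rule out_card[OF qge])
  define M where "M = (\<lambda>s. n+1-s) ` (run t ` S)"
  have Mfin: "finite M" unfolding M_def using Sfin by simp
  have "card M \<le> card (run t ` S)" unfolding M_def using Sfin by (intro card_image_le) simp
  hence cM: "card M \<le> 2^q" using c1 by linarith
  have covers: "\<forall>k\<in>{1..n}. \<exists>m\<in>M. real m \<le> d * real k \<and> k \<le> m"
  proof
    fix k assume k: "k \<in> {1..n}"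
    define s where "s = run t (Xk k)"
    have ar: "approx_region d n (Xk k) s" using corr sorted unfolding s_def by blast
    have "n+1-k \<in> {1..n}" using k by auto
    moreover have "Xk k (n+1-k) = 1" unfolding Xk_def by simp
    ultimately have sle: "s \<le> n+1-k" using ar unfolding approx_region_def by blast
    have "{j. s \<le> j \<and> j \<le> n \<and> Xk k j = 1} = {n+1-k..n}"
      using sle unfolding Xk_def by auto
    hence cardk: "card {j. s \<le> j \<and> j \<le> n \<and> Xk k j = 1} = k" using k by auto
    have "real (card {j. s \<le> j \<and> j \<le> n \<and> Xk k j = 1}) \<ge> real (n + 1 - s) / d"
      using ar unfolding approx_region_def by blast
    hence "real (n + 1 - s) / d \<le> real k" using cardk by simp
    hence A: "real (n+1-s) \<le> d * real k" using d by (simp add: divide_le_eq mult.commute)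
    have B: "k \<le> n+1-s" using sle k by auto
    have "n+1-s \<in> M" unfolding M_def S_def s_def using k by auto
    with A B show "\<exists>m\<in>M. real m \<le> d * real k \<and> k \<le> m" by blast
  qed
  have "real n \<le> (2*d)^card M" by (rule cover[OF Mfin _ covers]) (use d in simp)
  also have "\<dots> \<le> (2*d)^(2^q)" by (rule power_increasing[OF cM]) (use d in simp)
  finally show ?thesis using X sorted unfolding S_def by auto
qed

theorem corollary1:
  fixes \<epsilon> d :: real and A :: "nat \<Rightarrow> qtree"
  assumes "0 < \<epsilon>" and "\<epsilon> < 1" and "d > 1"
    and "\<forall>n. queries_in n (A n)"
    and "\<forall>n X. sorted01 n X \<longrightarrow> approx_region d n X (run (A n) X)"
  shows "\<exists>N. \<forall>n\<ge>N. \<exists>X. sorted01 n X \<and>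
           real (cost (A n) X) \<ge> (1 - \<epsilon>) * log 2 (log 2 (real n))"
proof -
  define L where "L = log 2 (log 2 (2*d))"
  have l2d: "log 2 (2*d) > 1" using assms(3) by simp
  have Lpos: "L > 0" unfolding L_def using l2d by simp
  define N where "N = nat (ceiling (2 powr (2 powr (L/\<epsilon>)))) + 2"
  show ?thesis
  proof (rule exI[of _ N], intro allI impI)
    fix n assume nN: "N \<le> n"
    have n1: "n \<ge> 1" using nN unfolding N_def by simp
    obtain X where X: "sorted01 n X" "real n \<le> (2*d)^(2^cost (A n) X)"
      using lower_n[OF assms(3) n1] assms(5) by blast
    define q where "q = cost (A n) X"
    have "nat (ceiling (2 powr (2 powr (L/\<epsilon>)))) \<le> n" using nN unfolding N_def by linarith
    hence "real (nat (ceiling (2 powr (2 powr (L/\<epsilon>))))) \<le> real n" by (simp only: of_nat_le_iff)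
    hence "2 powr (2 powr (L/\<epsilon>)) \<le> real n" using real_nat_ceiling_ge[of "2 powr (2 powr (L/\<epsilon>))"] by linarith
    hence big1: "2 powr (L/\<epsilon>) \<le> log 2 (real n)" using n1 by (subst le_log_iff) auto
    have ln_pos: "log 2 (real n) > 0" using big1 by (smt (verit) powr_gt_zero)
    hence big: "L/\<epsilon> \<le> log 2 (log 2 (real n))" using big1 by (subst le_log_iff) auto
    have "log 2 (real n) \<le> log 2 ((2*d)^(2^q))"
      using X(2) n1 assms(3) unfolding q_def by (subst log_le_cancel_iff) auto
    also have "\<dots> = 2^q * log 2 (2*d)" using log_nat_power[of "2*d" 2 "2^q"] assms(3) by simp
    finally have h1: "log 2 (real n) \<le> 2^q * log 2 (2*d)" .
    have "log 2 (log 2 (real n)) \<le> log 2 (2^q * log 2 (2*d))"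
      using h1 ln_pos l2d by (subst log_le_cancel_iff) auto
    also have "\<dots> = q + L" unfolding L_def using l2d by (simp add: log_mult)
    finally have h2: "log 2 (log 2 (real n)) \<le> q + L" .
    have "\<epsilon> * log 2 (log 2 (real n)) \<ge> L" using big assms(1) by (simp add: divide_le_eq mult.commute)
    hence "(1 - \<epsilon>) * log 2 (log 2 (real n)) \<le> real q" using h2 by (simp add: algebra_simps)
    thus "\<exists>X. sorted01 n X \<and> real (cost (A n) X) \<ge> (1 - \<epsilon>) * log 2 (log 2 (real n))"
      using X(1) unfolding q_def by blast
  qed
qed

end
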